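(* Let $\Omega\subset\mathbb{R}^d$ be bounded, $T>0$, $Q_T=\Omega\times(0,T)$, $\alpha\in(0,1)$, and let $a_1,a_2,a_3$ be positive constants. Assume $f,g\in C^{\alpha,\alpha/2}(\bar Q_T)$ and $u_0\in C^\alpha(\bar\Omega)$. Then any (weak) solution $u\in L^\infty(Q_T)$ of $\partial_t u=a_1fu+a_2g-a_3u^2$ in $Q_T$, $u(x,0)=u_0(x)$ for $x\in\Omega$, belongs to $C^{\alpha,\alpha/2}(\bar Q_T)$, i.e. is $\alpha$-Hölder continuous on $\bar\Omega\times[0,T]$.
   Context: $C^{\alpha,\alpha/2}(\bar Q_T)$ is the space of bounded functions $u$ with finite seminorm $\sup_{(x_1,t_1)\ne(x_2,t_2)}\frac{|u(x_1,t_1)-u(x_2,t_2)|}{|x_1-x_2|^\alpha+|t_1-t_2|^{\alpha/2}}$, with norm $\|u\|_{L^\infty}$ plus this seminorm. *)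

theory Defs
  imports "HOL-Analysis.Analysis"
begin

definition holder_space :: "'a::metric_space set \<Rightarrow> real \<Rightarrow> ('a \<Rightarrow> real) \<Rightarrow> bool" where
  "holder_space S \<alpha> u \<longleftrightarrow> bounded (u ` S) \<and>
     (\<exists>C. \<forall>x\<in>S. \<forall>y\<in>S. \<bar>u x - u y\<bar> \<le> C * dist x y powr \<alpha>)"

definition par_holder_space ::
    "('a::euclidean_space \<times> real) set \<Rightarrow> real \<Rightarrow> ('a \<times> real \<Rightarrow> real) \<Rightarrow> bool" where
  "par_holder_space S \<alpha> u \<longleftrightarrow> bounded (u ` S) \<and>
     (\<exists>C. \<forall>p\<in>S. \<forall>q\<in>S. \<bar>u p - u q\<bar> \<le>
        C * (norm (fst p - fst q) powr \<alpha> + \<bar>snd p - snd q\<bar> powr (\<alpha> / 2)))"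

text \<open>Weak solution u in L^infty(Q_T) of  d_t u = a1 f u + a2 g - a3 u^2,  u(.,0) = u0,
  in integral form: u is measurable, essentially bounded on Q_T, and for a.e. x in Omega,
  for a.e. t in (0,T), u(x,t) = u0 x + int_0^t (a1 f u + a2 g - a3 u^2)(x,s) ds.\<close>
definition weak_solution ::
    "'a::euclidean_space set \<Rightarrow> real \<Rightarrow> real \<Rightarrow> real \<Rightarrow> real \<Rightarrow> ('a \<times> real \<Rightarrow> real)
      \<Rightarrow> ('a \<times> real \<Rightarrow> real) \<Rightarrow> ('a \<Rightarrow> real) \<Rightarrow> ('a \<times> real \<Rightarrow> real) \<Rightarrow> bool" where
  "weak_solution \<Omega> T a1 a2 a3 f g u0 u \<longleftrightarrow>
     u \<in> borel_measurable lborel \<and>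
     (\<exists>M. AE p in lborel. p \<in> \<Omega> \<times> {0<..<T} \<longrightarrow> \<bar>u p\<bar> \<le> M) \<and>
     (AE x in lborel. x \<in> \<Omega> \<longrightarrow>
        (AE t in lborel. t \<in> {0<..<T} \<longrightarrow>
           u (x, t) = u0 x + (LINT s:{0..t}|lborel.
              a1 * f (x, s) * u (x, s) + a2 * g (x, s) - a3 * (u (x, s))\<^sup>2)))"

end

theory Submission
  imports Defs
begin

lemma gronwall_aux:
  fixes \<phi> :: "real \<Rightarrow> real"
  assumes cont: "continuous_on {0..T} \<phi>" and L: "0 \<le> L"
    and le: "\<And>t. 0 \<le> t \<Longrightarrow> t \<le> T \<Longrightarrow> \<phi> t \<le> A + L * integral {0..t} \<phi>"
    and t: "0 \<le> t" "t \<le> T"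
  shows "\<phi> t \<le> A * exp (L * t)"
proof -
  define \<Phi> where "\<Phi> s = integral {0..s} \<phi>" for s
  define \<psi> where "\<psi> s = (A + L * \<Phi> s) * exp (- L * s)" for s
  have der: "(\<Phi> has_real_derivative \<phi> s) (at s within {0..T})" if "s \<in> {0..T}" for s
    using integral_has_vector_derivative[OF cont that] unfolding \<Phi>_def
    by (simp add: has_real_derivative_iff_has_vector_derivative)
  have derpsi: "(\<psi> has_real_derivative
      (L * \<phi> s * exp (- L * s) + (A + L * \<Phi> s) * (exp (- L * s) * (- L)))) (at s within {0..T})"
    if "s \<in> {0..T}" for s
    unfolding \<psi>_def
    by (auto intro!: derivative_eq_intros der[OF that])
  have contpsi: "continuous_on {0..T} \<psi>"
    using derpsi by (meson DERIV_continuous continuous_on_eq_continuous_within)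
  have "\<psi> t \<le> \<psi> 0"
  proof (rule DERIV_nonpos_imp_decreasing_open[OF t(1)])
    fix s assume s: "0 < s" "s < t"
    then have "at s within {0..T} = at s" using t by (intro at_within_Icc_at) auto
    then have d: "(\<psi> has_real_derivative
      (L * \<phi> s * exp (- L * s) + (A + L * \<Phi> s) * (exp (- L * s) * (- L)))) (at s)"
      using derpsi[of s] s t by simp
    have "L * \<phi> s * exp (- L * s) + (A + L * \<Phi> s) * (exp (- L * s) * (- L))
        = L * exp (- L * s) * (\<phi> s - (A + L * \<Phi> s))" by (simp add: algebra_simps)
    also have "\<dots> \<le> 0"
      using le[of s] s t L unfolding \<Phi>_def
      by (intro mult_nonneg_nonpos) auto
    finally show "\<exists>y. (\<psi> has_real_derivative y) (at s) \<and> y \<le> 0" using d by blast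
  next
    show "continuous_on {0..t} \<psi>" using contpsi by (rule continuous_on_subset) (use t in auto)
  qed
  also have "\<psi> 0 = A" by (simp add: \<psi>_def \<Phi>_def)
  finally have "(A + L * \<Phi> t) * exp (- L * t) \<le> A" by (simp add: \<psi>_def)
  then have "A + L * \<Phi> t \<le> A * exp (L * t)"
    by (simp add: exp_minus field_simps)
  then show ?thesis using le[OF t] unfolding \<Phi>_def by linarith
qed


lemma powr_small:
  fixes e c b z :: real
  assumes "e > 0" "c > 0" "b > 0" "0 \<le> z" "z < (e / c) powr (1 / b)"
  shows "c * z powr b < e"
proof -
  have "z powr b < ((e / c) powr (1 / b)) powr b"
    using assms by (intro powr_less_mono2) auto
  also have "\<dots> = e / c" using assms by (simp add: powr_powr)
  finally show ?thesis using assms by (simp add: field_simps)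
qed

lemma ucont_holder2:
  fixes k :: "'x::metric_space \<Rightarrow> real"
  assumes H: "\<And>x y. x \<in> S \<Longrightarrow> y \<in> S \<Longrightarrow> \<bar>k x - k y\<bar> \<le> C * dist x y powr \<beta> + D * dist x y powr \<gamma>"
    and b: "\<beta> > 0" and g: "\<gamma> > 0"
  shows "uniformly_continuous_on S k"
  unfolding uniformly_continuous_on_def
proof (intro allI impI)
  fix e :: real assume e: "e > 0"
  define C' where "C' = \<bar>C\<bar> + 1"
  define D' where "D' = \<bar>D\<bar> + 1"
  define d where "d = min (((e/2) / C') powr (1/\<beta>)) (((e/2) / D') powr (1/\<gamma>))"
  have C': "C' > 0" and D': "D' > 0" by (auto simp: C'_def D'_def)
  have "d > 0" using e C' D' by (simp add: d_def)
  moreover have "dist (k x') (k x) < e" if "x \<in> S" "x' \<in> S" "dist x' x < d" for x x'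
  proof -
    have 1: "C' * dist x' x powr \<beta> < e/2"
      by (rule powr_small) (use e C' b that in \<open>auto simp: d_def\<close>)
    have 2: "D' * dist x' x powr \<gamma> < e/2"
      by (rule powr_small) (use e D' g that in \<open>auto simp: d_def\<close>)
    have "C * dist x' x powr \<beta> \<le> C' * dist x' x powr \<beta>"
      by (intro mult_right_mono) (auto simp: C'_def)
    moreover have "D * dist x' x powr \<gamma> \<le> D' * dist x' x powr \<gamma>"
      by (intro mult_right_mono) (auto simp: D'_def)
    ultimately show ?thesis using H[OF that(2,1)] 1 2 by (simp add: dist_real_def)
  qed
  ultimately show "\<exists>d>0. \<forall>x\<in>S. \<forall>x'\<in>S. dist x' x < d \<longrightarrow> dist (k x') (k x) < e" by blast
qed


lemma holder_closure:
  fixes g :: "'a::euclidean_space \<times> real \<Rightarrow> real"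
  assumes cont: "continuous_on (closure X) g"
    and H: "\<And>p q. p \<in> X \<Longrightarrow> q \<in> X \<Longrightarrow> \<bar>g p - g q\<bar> \<le> C * (norm (fst p - fst q) powr \<alpha> + \<bar>snd p - snd q\<bar> powr (\<alpha>/2))"
    and a: "\<alpha> > 0"
    and p: "p \<in> closure X" and q: "q \<in> closure X"
  shows "\<bar>g p - g q\<bar> \<le> C * (norm (fst p - fst q) powr \<alpha> + \<bar>snd p - snd q\<bar> powr (\<alpha>/2))"
proof -
  obtain P where P: "\<And>n. P n \<in> X" "P \<longlonglongrightarrow> p" using p unfolding closure_sequential by blast
  obtain Q where Q: "\<And>n. Q n \<in> X" "Q \<longlonglongrightarrow> q" using q unfolding closure_sequential by blast
  have gP: "(\<lambda>n. g (P n)) \<longlonglongrightarrow> g p"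
    by (rule continuous_on_tendsto_compose[OF cont P(2) p]) (use P(1) closure_subset in \<open>auto intro!: always_eventually\<close>)
  have gQ: "(\<lambda>n. g (Q n)) \<longlonglongrightarrow> g q"
    by (rule continuous_on_tendsto_compose[OF cont Q(2) q]) (use Q(1) closure_subset in \<open>auto intro!: always_eventually\<close>)
  have L: "(\<lambda>n. \<bar>g (P n) - g (Q n)\<bar>) \<longlonglongrightarrow> \<bar>g p - g q\<bar>"
    by (intro tendsto_intros gP gQ)
  have n1: "(\<lambda>n. norm (fst (P n) - fst (Q n))) \<longlonglongrightarrow> norm (fst p - fst q)"
    by (intro tendsto_intros P Q)
  have n2: "(\<lambda>n. \<bar>snd (P n) - snd (Q n)\<bar>) \<longlonglongrightarrow> \<bar>snd p - snd q\<bar>"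
    by (intro tendsto_intros P Q)
  have R: "(\<lambda>n. C * (norm (fst (P n) - fst (Q n)) powr \<alpha> + \<bar>snd (P n) - snd (Q n)\<bar> powr (\<alpha>/2)))
      \<longlonglongrightarrow> C * (norm (fst p - fst q) powr \<alpha> + \<bar>snd p - snd q\<bar> powr (\<alpha>/2))"
    using a by (intro tendsto_intros tendsto_powr2[OF n1] tendsto_powr2[OF n2]) auto
  show ?thesis
    by (rule LIMSEQ_le[OF L R]) (use H P(1) Q(1) in auto)
qed


lemma abs4: "\<bar>(A::real)+B+C-D\<bar> \<le> \<bar>A\<bar>+\<bar>B\<bar>+\<bar>C\<bar>+\<bar>D\<bar>" by arith

lemma hdiff_bound:
  fixes fx fy gx gy ux uy Fm M Cf Cg r a1 a2 a3 :: real
  assumes "\<bar>fx\<bar> \<le> Fm" "\<bar>ux\<bar> \<le> M" "\<bar>uy\<bar> \<le> M" "\<bar>fx - fy\<bar> \<le> Cf * r" "\<bar>gx - gy\<bar> \<le> Cg * r"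
    "a1 > 0" "a2 > 0" "a3 > 0"
  shows "\<bar>(a1*fx*ux + a2*gx - a3*ux\<^sup>2) - (a1*fy*uy + a2*gy - a3*uy\<^sup>2)\<bar>
     \<le> (a1*Fm + 2*a3*M) * \<bar>ux - uy\<bar> + (a1*Cf*M + a2*Cg) * r"
proof -
  have e: "(a1*fx*ux + a2*gx - a3*ux\<^sup>2) - (a1*fy*uy + a2*gy - a3*uy\<^sup>2)
      = a1*(fx*(ux-uy)) + a1*((fx-fy)*uy) + a2*(gx-gy) - a3*((ux+uy)*(ux-uy))"
    by (simp add: algebra_simps power2_eq_square)
  have 1: "\<bar>fx*(ux-uy)\<bar> \<le> Fm * \<bar>ux-uy\<bar>"
    unfolding abs_mult using assms by (intro mult_right_mono) auto
  have 2: "\<bar>(fx-fy)*uy\<bar> \<le> (Cf*r) * M"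
    unfolding abs_mult using assms by (intro mult_mono) auto
  have 3: "\<bar>gx-gy\<bar> \<le> Cg*r" using assms by auto
  have 4: "\<bar>(ux+uy)*(ux-uy)\<bar> \<le> (2*M) * \<bar>ux-uy\<bar>"
    unfolding abs_mult using assms by (intro mult_right_mono) auto
  have "\<bar>a1*(fx*(ux-uy)) + a1*((fx-fy)*uy) + a2*(gx-gy) - a3*((ux+uy)*(ux-uy))\<bar>
     \<le> a1*\<bar>fx*(ux-uy)\<bar> + a1*\<bar>(fx-fy)*uy\<bar> + a2*\<bar>gx-gy\<bar> + a3*\<bar>(ux+uy)*(ux-uy)\<bar>"
    using assms abs4[of "a1*(fx*(ux-uy))" "a1*((fx-fy)*uy)" "a2*(gx-gy)" "a3*((ux+uy)*(ux-uy))"]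
    by (simp add: abs_mult)
  also have "\<dots> \<le> a1*(Fm * \<bar>ux-uy\<bar>) + a1*((Cf*r) * M) + a2*(Cg*r) + a3*((2*M) * \<bar>ux-uy\<bar>)"
    using assms 1 2 3 4 by (intro add_mono mult_left_mono) auto
  also have "\<dots> = (a1*Fm + 2*a3*M) * \<bar>ux - uy\<bar> + (a1*Cf*M + a2*Cg) * r"
    by (simp add: algebra_simps)
  finally show ?thesis using e by simp
qed

lemma h_bound:
  fixes fx gx ux Fm Gm M a1 a2 a3 :: real
  assumes "\<bar>fx\<bar> \<le> Fm" "\<bar>gx\<bar> \<le> Gm" "\<bar>ux\<bar> \<le> M" "a1 > 0" "a2 > 0" "a3 > 0"
  shows "\<bar>a1*fx*ux + a2*gx - a3*ux\<^sup>2\<bar> \<le> a1*Fm*M + a2*Gm + a3*M\<^sup>2"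
proof -
  have "\<bar>a1*fx*ux + a2*gx - a3*ux\<^sup>2\<bar> \<le> a1*(\<bar>fx\<bar>*\<bar>ux\<bar>) + a2*\<bar>gx\<bar> + a3*\<bar>ux\<bar>\<^sup>2"
    using assms abs4[of "a1*fx*ux" "a2*gx" 0 "a3*ux\<^sup>2"] by (simp add: abs_mult)
  also have "\<dots> \<le> a1*(Fm*M) + a2*Gm + a3*M\<^sup>2"
    using assms by (intro add_mono mult_left_mono mult_mono power_mono) auto
  finally show ?thesis by (simp add: algebra_simps)
qed


lemma absC: assumes "(a::real) \<le> C * X" "0 \<le> X" shows "a \<le> \<bar>C\<bar> * X"
proof -
  have "C * X \<le> \<bar>C\<bar> * X" using assms(2) by (rule mult_right_mono[OF abs_ge_self])
  then show ?thesis using assms(1) by linarith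
qed

lemma AE_conj3: assumes "AE t in M. P t" "AE t in M. Q t" "\<And>t. P t \<Longrightarrow> Q t \<Longrightarrow> R t"
  shows "AE t in M. R t"
  using assms(1,2) by (rule eventually_elim2) (rule assms(3))

theorem lemma5:
  fixes \<Omega> :: "'a::euclidean_space set"
    and T \<alpha> a1 a2 a3 :: real
    and f g u :: "'a \<times> real \<Rightarrow> real"
    and u0 :: "'a \<Rightarrow> real"
  assumes "open \<Omega>" and "bounded \<Omega>"
    and "T > 0" and "0 < \<alpha>" and "\<alpha> < 1"
    and "a1 > 0" and "a2 > 0" and "a3 > 0"
    and "par_holder_space (closure \<Omega> \<times> {0..T}) \<alpha> f"
    and "par_holder_space (closure \<Omega> \<times> {0..T}) \<alpha> g"
    and "holder_space (closure \<Omega>) \<alpha> u0"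
    and "weak_solution \<Omega> T a1 a2 a3 f g u0 u"
  shows "\<exists>v. par_holder_space (closure \<Omega> \<times> {0..T}) \<alpha> v \<and>
             (AE p in lborel. p \<in> \<Omega> \<times> {0<..<T} \<longrightarrow> u p = v p)"
proof -
  let ?S = "closure \<Omega> \<times> {0..T}"
  note T = \<open>T > 0\<close> and al = \<open>0 < \<alpha>\<close> \<open>\<alpha> < 1\<close> and a = \<open>a1 > 0\<close> \<open>a2 > 0\<close> \<open>a3 > 0\<close>
  note hf = assms(9)[unfolded par_holder_space_def]
  note hg = assms(10)[unfolded par_holder_space_def]
  note hu0 = assms(11)[unfolded holder_space_def]
  note ws = assms(12)[unfolded weak_solution_def]
  have "bounded (f ` ?S)" using hf by blast
  then obtain Fm0 where Fm0: "\<forall>y\<in>f ` ?S. \<bar>y\<bar> \<le> Fm0"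
    unfolding bounded_real by blast
  define Fm where "Fm = \<bar>Fm0\<bar>"
  have Fm: "\<And>p. p \<in> ?S \<Longrightarrow> \<bar>f p\<bar> \<le> Fm" "Fm \<ge> 0"
  proof -
    fix p assume "p \<in> ?S"
    then have "\<bar>f p\<bar> \<le> Fm0" using Fm0 by blast
    then show "\<bar>f p\<bar> \<le> Fm" unfolding Fm_def by linarith
  qed (simp add: Fm_def)
  have "bounded (g ` ?S)" using hg by blast
  then obtain Gm0 where Gm0: "\<forall>y\<in>g ` ?S. \<bar>y\<bar> \<le> Gm0"
    unfolding bounded_real by blast
  define Gm where "Gm = \<bar>Gm0\<bar>"
  have Gm: "\<And>p. p \<in> ?S \<Longrightarrow> \<bar>g p\<bar> \<le> Gm" "Gm \<ge> 0"
  proof -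
    fix p assume "p \<in> ?S"
    then have "\<bar>g p\<bar> \<le> Gm0" using Gm0 by blast
    then show "\<bar>g p\<bar> \<le> Gm" unfolding Gm_def by linarith
  qed (simp add: Gm_def)
  obtain Cf0 where Cf0: "\<And>p q. p \<in> ?S \<Longrightarrow> q \<in> ?S \<Longrightarrow> \<bar>f p - f q\<bar> \<le> Cf0 * (norm (fst p - fst q) powr \<alpha> + \<bar>snd p - snd q\<bar> powr (\<alpha> / 2))"
    using hf by blast
  define Cf where "Cf = \<bar>Cf0\<bar>"
  have Cf: "\<bar>f p - f q\<bar> \<le> Cf * (norm (fst p - fst q) powr \<alpha> + \<bar>snd p - snd q\<bar> powr (\<alpha> / 2))"
    if "p \<in> ?S" "q \<in> ?S" for p q
    unfolding Cf_def by (rule absC[OF Cf0[OF that]]) auto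
  have Cf0': "Cf \<ge> 0" by (simp add: Cf_def)
  obtain Cg0 where Cg0: "\<And>p q. p \<in> ?S \<Longrightarrow> q \<in> ?S \<Longrightarrow> \<bar>g p - g q\<bar> \<le> Cg0 * (norm (fst p - fst q) powr \<alpha> + \<bar>snd p - snd q\<bar> powr (\<alpha> / 2))"
    using hg by blast
  define Cg where "Cg = \<bar>Cg0\<bar>"
  have Cg: "\<bar>g p - g q\<bar> \<le> Cg * (norm (fst p - fst q) powr \<alpha> + \<bar>snd p - snd q\<bar> powr (\<alpha> / 2))"
    if "p \<in> ?S" "q \<in> ?S" for p q
    unfolding Cg_def by (rule absC[OF Cg0[OF that]]) auto
  have Cg0': "Cg \<ge> 0" by (simp add: Cg_def)
  obtain Cu0 where Cu0: "\<And>x y. x \<in> closure \<Omega> \<Longrightarrow> y \<in> closure \<Omega> \<Longrightarrow> \<bar>u0 x - u0 y\<bar> \<le> Cu0 * dist x y powr \<alpha>"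
    using hu0 by blast
  define Cu where "Cu = \<bar>Cu0\<bar>"
  have Cu: "\<bar>u0 x - u0 y\<bar> \<le> Cu * dist x y powr \<alpha>" if "x \<in> closure \<Omega>" "y \<in> closure \<Omega>" for x y
    unfolding Cu_def by (rule absC[OF Cu0[OF that]]) auto
  have Cu0': "Cu \<ge> 0" by (simp add: Cu_def)

  have umeas: "u \<in> borel_measurable lborel" using ws by blast
  have umeas2: "u \<in> borel_measurable (lborel \<Otimes>\<^sub>M lborel)" using umeas by (simp only: lborel_prod)
  obtain M0 where M0: "AE p in lborel. p \<in> \<Omega> \<times> {0<..<T} \<longrightarrow> \<bar>u p\<bar> \<le> M0" using ws by blast
  define M where "M = \<bar>M0\<bar>"
  have M0': "M \<ge> 0" by (simp add: M_def)
  have "AE p in (lborel :: ('a \<times> real) measure). p \<in> \<Omega> \<times> {0<..<T} \<longrightarrow> \<bar>u p\<bar> \<le> M"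
    using M0 by eventually_elim (auto simp: M_def)
  then have "AE p in (lborel \<Otimes>\<^sub>M lborel :: ('a \<times> real) measure). p \<in> \<Omega> \<times> {0<..<T} \<longrightarrow> \<bar>u p\<bar> \<le> M"
    by (simp only: lborel_prod)
  then have AEb: "AE x in lborel. AE t in lborel. (x, t) \<in> \<Omega> \<times> {0<..<T} \<longrightarrow> \<bar>u (x, t)\<bar> \<le> M"
    by (rule lborel_pair.AE_pair)
  define good where "good x \<longleftrightarrow> (AE t in lborel. t \<in> {0<..<T} \<longrightarrow> \<bar>u (x, t)\<bar> \<le> M \<and>
      u (x, t) = u0 x + (LINT s:{0..t}|lborel. a1 * f (x, s) * u (x, s) + a2 * g (x, s) - a3 * (u (x, s))\<^sup>2))" for x
  have AEg: "AE x in lborel. x \<in> \<Omega> \<longrightarrow> good x"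
  proof -
    have "AE x in lborel. x \<in> \<Omega> \<longrightarrow> (AE t in lborel. t \<in> {0<..<T} \<longrightarrow>
      u (x, t) = u0 x + (LINT s:{0..t}|lborel. a1 * f (x, s) * u (x, s) + a2 * g (x, s) - a3 * (u (x, s))\<^sup>2))"
      using ws by blast
    with AEb show ?thesis
    proof (rule AE_conj3)
      fix x assume 1: "AE t in lborel. (x, t) \<in> \<Omega> \<times> {0<..<T} \<longrightarrow> \<bar>u (x, t)\<bar> \<le> M"
        and 2: "x \<in> \<Omega> \<longrightarrow> (AE t in lborel. t \<in> {0<..<T} \<longrightarrow>
      u (x, t) = u0 x + (LINT s:{0..t}|lborel. a1 * f (x, s) * u (x, s) + a2 * g (x, s) - a3 * (u (x, s))\<^sup>2))"
      show "x \<in> \<Omega> \<longrightarrow> good x"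
      proof
        assume x: "x \<in> \<Omega>"
        show "good x" unfolding good_def
          by (rule AE_conj3[OF 1 2[rule_format, OF x]]) (use x in auto)
      qed
    qed
  qed
  from AEg obtain N where N: "{x \<in> space lborel. \<not> (x \<in> \<Omega> \<longrightarrow> good x)} \<subseteq> N"
    "emeasure lborel N = 0" "N \<in> sets lborel" by (rule AE_E)
  define G where "G = {x \<in> \<Omega>. good x}"
  have GN: "\<Omega> - G \<subseteq> N" using N(1) by (auto simp: G_def)
  have GO: "G \<subseteq> \<Omega>" by (auto simp: G_def)
  have Gc: "x \<in> closure \<Omega>" if "x \<in> G" for x using that GO closure_subset by blast

  have clG: "closure G = closure \<Omega>"
  proof
    show "closure G \<subseteq> closure \<Omega>" using GO by (rule closure_mono)
    have "\<Omega> \<subseteq> closure G"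
    proof
      fix x assume x: "x \<in> \<Omega>"
      show "x \<in> closure G"
      proof (rule ccontr)
        assume "x \<notin> closure G"
        then obtain e1 where e1: "e1 > 0" "\<And>y. y \<in> G \<Longrightarrow> \<not> dist y x < e1"
          unfolding closure_approachable by auto
        obtain e2 where e2: "e2 > 0" "ball x e2 \<subseteq> \<Omega>"
          using \<open>open \<Omega>\<close> x open_contains_ball by blast
        define e where "e = min e1 e2"
        have "ball x e \<subseteq> N"
        proof
          fix y assume "y \<in> ball x e"
          then have "dist x y < e1" "dist x y < e2" by (auto simp: e_def)
          then have "y \<in> \<Omega>" "y \<notin> G" using e1(2)[of y] e2(2) by (auto simp: dist_commute)
          then show "y \<in> N" using GN by blast
        qed
        then have "emeasure lborel (ball x e) \<le> emeasure lborel N"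
          using N(3) by (rule emeasure_mono)
        then have "emeasure lborel (ball x e) = 0" using N(2) by simp
        then have "measure lborel (ball x e) = 0" by (simp add: measure_def)
        moreover have "measure lborel (ball x e) > 0" using e1 e2 by (intro content_ball_pos) (simp add: e_def)
        ultimately show False by simp
      qed
    qed
    then show "closure \<Omega> \<subseteq> closure G" by (rule closure_minimal) simp
  qed
  define c where "c t = max 0 (min T t)" for t
  have c01: "0 \<le> c t" "c t \<le> T" for t using T by (auto simp: c_def)
  have cid: "c t = t" if "t \<in> {0..T}" for t using that by (auto simp: c_def)
  have clip: "\<bar>c t1 - c t2\<bar> \<le> \<bar>t1 - t2\<bar>" for t1 t2 unfolding c_def by (auto simp: max_def min_def)
  have cS: "(x, c s) \<in> ?S" if "x \<in> closure \<Omega>" for x s using that c01 by auto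

  have kcont: "continuous_on UNIV (\<lambda>s. k (x, c s))"
    if x: "x \<in> closure \<Omega>" and Hk: "\<And>p q. p \<in> ?S \<Longrightarrow> q \<in> ?S \<Longrightarrow>
      \<bar>k p - k q\<bar> \<le> Ck * (norm (fst p - fst q) powr \<alpha> + \<bar>snd p - snd q\<bar> powr (\<alpha> / 2))"
      and Ck: "Ck \<ge> 0" for k :: "'a \<times> real \<Rightarrow> real" and x Ck
  proof -
    have "uniformly_continuous_on UNIV (\<lambda>s. k (x, c s))"
    proof (rule ucont_holder2[where C=Ck and \<beta>="\<alpha>/2" and D=0 and \<gamma>=1])
      fix s1 s2 :: real
      have "\<bar>k (x, c s1) - k (x, c s2)\<bar> \<le> Ck * (norm (x - x) powr \<alpha> + \<bar>c s1 - c s2\<bar> powr (\<alpha> / 2))"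
        using Hk[OF cS[OF x] cS[OF x]] by simp
      also have "\<dots> = Ck * \<bar>c s1 - c s2\<bar> powr (\<alpha> / 2)" by simp
      also have "\<dots> \<le> Ck * dist s1 s2 powr (\<alpha> / 2)"
        using al clip[of s1 s2] Ck by (intro mult_left_mono powr_mono2) (auto simp: dist_real_def)
      finally show "\<bar>k (x, c s1) - k (x, c s2)\<bar> \<le> Ck * dist s1 s2 powr (\<alpha> / 2) + 0 * dist s1 s2 powr 1"
        by simp
    qed (use al in auto)
    then show ?thesis by (rule uniformly_continuous_imp_continuous)
  qed
  have fcont: "continuous_on UNIV (\<lambda>s. f (x, c s))" if "x \<in> closure \<Omega>" for x
    by (rule kcont[OF that Cf Cf0'])
  have gcont: "continuous_on UNIV (\<lambda>s. g (x, c s))" if "x \<in> closure \<Omega>" for x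
    by (rule kcont[OF that Cg Cg0'])

  define h where "h x s = a1 * f (x, c s) * u (x, s) + a2 * g (x, c s) - a3 * (u (x, s))\<^sup>2" for x s
  define w where "w x t = u0 x + (LINT s:{0..c t}|lborel. h x s)" for x t
  define B where "B = a1*Fm*M + a2*Gm + a3*M\<^sup>2"
  have B0: "B \<ge> 0" unfolding B_def using a Fm(2) Gm(2) M0' by simp

  have hmeas: "h x \<in> borel_measurable borel" if "x \<in> closure \<Omega>" for x
  proof -
    have 1: "(\<lambda>s. f (x, c s)) \<in> borel_measurable borel" by (rule borel_measurable_continuous_onI[OF fcont[OF that]])
    have 2: "(\<lambda>s. g (x, c s)) \<in> borel_measurable borel" by (rule borel_measurable_continuous_onI[OF gcont[OF that]])
    have 3: "(\<lambda>s. u (x, s)) \<in> borel_measurable borel" using measurable_Pair2[OF umeas2, of x] by simp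
    show ?thesis unfolding h_def[abs_def]
      by (intro borel_measurable_diff borel_measurable_add borel_measurable_times borel_measurable_const
          borel_measurable_power 1 2 3)
  qed

  have Gw: "AE s in lborel. s \<in> {0<..<T} \<longrightarrow> \<bar>u (x, s)\<bar> \<le> M \<and> u (x, s) = w x s" if "x \<in> G" for x
  proof -
    have "good x" using that by (simp add: G_def)
    then show ?thesis unfolding good_def
    proof eventually_elim
      case (elim t)
      show ?case
      proof
        assume t: "t \<in> {0<..<T}"
        have "(LINT s:{0..t}|lborel. a1 * f (x, s) * u (x, s) + a2 * g (x, s) - a3 * (u (x, s))\<^sup>2)
            = (LINT s:{0..t}|lborel. h x s)"
          by (rule set_lebesgue_integral_cong) (use t in \<open>auto simp: h_def cid\<close>)
        moreover have wt: "w x t = u0 x + (LINT s:{0..t}|lborel. h x s)" using t by (simp add: w_def cid)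
        ultimately have "u (x, t) = w x t" using elim t by simp
        moreover have "\<bar>u (x, t)\<bar> \<le> M" using elim t by blast
        ultimately show "\<bar>u (x, t)\<bar> \<le> M \<and> u (x, t) = w x t" by blast
      qed
    qed
  qed

  have hb: "\<bar>h x s\<bar> \<le> B" if "x \<in> closure \<Omega>" "\<bar>u (x, s)\<bar> \<le> M" for x s
    unfolding h_def B_def by (rule h_bound[OF Fm(1)[OF cS[OF that(1)]] Gm(1)[OF cS[OF that(1)]] that(2) a])

  have AEend: "AE s in lborel. s \<noteq> 0 \<and> s \<noteq> T"
    using AE_lborel_singleton[of 0] AE_lborel_singleton[of T] by (rule AE_conj3) auto

  have hint: "set_integrable lborel {0..T} (h x)" if x: "x \<in> G" for x
    unfolding set_integrable_def
  proof (rule Bochner_Integration.integrable_bound)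
    show "integrable lborel (\<lambda>s. indicator {0..T} s *\<^sub>R B)"
      using borel_integrable_atLeastAtMost'[of 0 T "\<lambda>_. B"] by (simp add: set_integrable_def)
    have [measurable]: "h x \<in> borel_measurable borel" using hmeas Gc x by blast
    show "(\<lambda>s. indicator {0..T} s *\<^sub>R h x s) \<in> borel_measurable lborel" by measurable
    show "AE s in lborel. norm (indicator {0..T} s *\<^sub>R h x s) \<le> norm (indicator {0..T} s *\<^sub>R B)"
      using Gw[OF x] AEend
    proof (rule AE_conj3)
      fix s assume 1: "s \<in> {0<..<T} \<longrightarrow> \<bar>u (x, s)\<bar> \<le> M \<and> u (x, s) = w x s" and 2: "s \<noteq> 0 \<and> s \<noteq> T"
      show "norm (indicator {0..T} s *\<^sub>R h x s) \<le> norm (indicator {0..T} s *\<^sub>R B)"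
      proof (cases "s \<in> {0..T}")
        case True
        then have "s \<in> {0<..<T}" using 2 by auto
        then have "\<bar>h x s\<bar> \<le> B" using 1 hb[OF Gc[OF x]] by blast
        then show ?thesis using True B0 by simp
      qed simp
    qed
  qed

  have hint_sub: "set_integrable lborel A (h x)" if "x \<in> G" "A \<in> sets lborel" "A \<subseteq> {0..T}" for x A
    by (rule set_integrable_subset[OF hint[OF that(1)] that(2,3)])

  have lipI: "\<bar>(LINT s:{0..b}|lborel. h x s) - (LINT s:{0..a}|lborel. h x s)\<bar> \<le> B * (b - a)"
    if x: "x \<in> G" and ab: "0 \<le> a" "a \<le> b" "b \<le> T" for x a b
  proof -
    have Un: "{0..b} = {0..a} \<union> {a<..b}" using ab by auto
    have "(LINT s:{0..b}|lborel. h x s) = (LINT s:{0..a}|lborel. h x s) + (LINT s:{a<..b}|lborel. h x s)"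
      unfolding Un by (rule set_integral_Un) (use ab in \<open>auto intro!: hint_sub[OF x]\<close>)
    then have "\<bar>(LINT s:{0..b}|lborel. h x s) - (LINT s:{0..a}|lborel. h x s)\<bar> = \<bar>LINT s:{a<..b}|lborel. h x s\<bar>"
      by simp
    also have "\<dots> \<le> (LINT s:{a<..b}|lborel. \<bar>h x s\<bar>)"
      using set_integral_norm_bound[OF hint_sub[OF x, of "{a<..b}"]] ab by fastforce
    also have "\<dots> \<le> (LINT s:{a<..b}|lborel. B)"
    proof (rule set_integral_mono_AE)
      show "set_integrable lborel {a<..b} (\<lambda>s. \<bar>h x s\<bar>)"
        by (rule set_integrable_abs, rule hint_sub[OF x]) (use ab in auto)
      show "set_integrable lborel {a<..b} (\<lambda>s. B)"
        by (rule set_integrable_subset[OF borel_integrable_atLeastAtMost'[of a b "\<lambda>_. B"]]) auto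
      show "AE s \<in> {a<..b} in lborel. \<bar>h x s\<bar> \<le> B"
        using Gw[OF x] AEend
      proof (rule AE_conj3)
        fix s assume 1: "s \<in> {0<..<T} \<longrightarrow> \<bar>u (x, s)\<bar> \<le> M \<and> u (x, s) = w x s" and 2: "s \<noteq> 0 \<and> s \<noteq> T"
        show "s \<in> {a<..b} \<longrightarrow> \<bar>h x s\<bar> \<le> B"
        proof
          assume "s \<in> {a<..b}"
          then have "s \<in> {0<..<T}" using 2 ab by auto
          then show "\<bar>h x s\<bar> \<le> B" using 1 hb[OF Gc[OF x]] by blast
        qed
      qed
    qed
    also have "\<dots> = B * (b - a)" using ab by (simp add: set_integral_const)
    finally show ?thesis .
  qed

  have wlip: "\<bar>w x t1 - w x t2\<bar> \<le> B * \<bar>t1 - t2\<bar>" if x: "x \<in> G" for x t1 t2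
  proof -
    have "\<bar>w x t1 - w x t2\<bar> \<le> B * \<bar>c t1 - c t2\<bar>"
    proof (cases "c t1 \<le> c t2")
      case True
      have "\<bar>w x t1 - w x t2\<bar> = \<bar>(LINT s:{0..c t2}|lborel. h x s) - (LINT s:{0..c t1}|lborel. h x s)\<bar>"
        by (simp add: w_def)
      also have "\<dots> \<le> B * (c t2 - c t1)" by (rule lipI[OF x c01(1) True c01(2)])
      finally show ?thesis using True by simp
    next
      case False
      have "\<bar>w x t1 - w x t2\<bar> = \<bar>(LINT s:{0..c t1}|lborel. h x s) - (LINT s:{0..c t2}|lborel. h x s)\<bar>"
        by (simp add: w_def)
      also have "\<dots> \<le> B * (c t1 - c t2)" using False by (intro lipI[OF x c01(1) _ c01(2)]) simp
      finally show ?thesis using False by simp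
    qed
    also have "\<dots> \<le> B * \<bar>t1 - t2\<bar>" by (intro mult_left_mono clip B0)
    finally show ?thesis .
  qed

  have wcont: "continuous_on UNIV (w x)" if x: "x \<in> G" for x
  proof -
    have "uniformly_continuous_on UNIV (w x)"
    proof (rule ucont_holder2[where C=B and \<beta>=1 and D=0 and \<gamma>=1])
      fix t1 t2 :: real
      show "\<bar>w x t1 - w x t2\<bar> \<le> B * dist t1 t2 powr 1 + 0 * dist t1 t2 powr 1"
        using wlip[OF x, of t1 t2] by (simp add: dist_real_def)
    qed auto
    then show ?thesis by (rule uniformly_continuous_imp_continuous)
  qed

  define L where "L = a1*Fm + 2*a3*M"
  define K where "K = a1*Cf*M + a2*Cg"
  have L0: "L \<ge> 0" unfolding L_def using a Fm(2) M0' by simp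
  have K0: "K \<ge> 0" unfolding K_def using a Cf0' Cg0' M0' by simp
  define C1 where "C1 = (Cu + K*T) * exp (L*T)"
  have C10: "C1 \<ge> 0" unfolding C1_def using Cu0' K0 T by simp

  have xhold: "\<bar>w x t - w y t\<bar> \<le> C1 * norm (x - y) powr \<alpha>"
    if x: "x \<in> G" and y: "y \<in> G" and t: "t \<in> {0..T}" for x y t
  proof -
    define \<rho> where "\<rho> = norm (x - y) powr \<alpha>"
    have \<rho>0: "\<rho> \<ge> 0" by (simp add: \<rho>_def)
    define D where "D s = w x s - w y s" for s
    have Dc: "continuous_on A D" for A
      unfolding D_def[abs_def]
      using continuous_on_subset[OF wcont[OF x], of A] continuous_on_subset[OF wcont[OF y], of A]
      by (intro continuous_intros) auto
    have ptw: "\<bar>h x s - h y s\<bar> \<le> L * \<bar>D s\<bar> + K * \<rho>"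
      if s: "s \<in> {0<..<T}" and ux: "\<bar>u (x, s)\<bar> \<le> M" and uy: "\<bar>u (y, s)\<bar> \<le> M"
        and ex: "u (x, s) = w x s" and ey: "u (y, s) = w y s" for s
    proof -
      have fxy: "\<bar>f (x, c s) - f (y, c s)\<bar> \<le> Cf * \<rho>"
        using Cf[OF cS[OF Gc[OF x], of s] cS[OF Gc[OF y], of s]] al by (simp add: \<rho>_def)
      have gxy: "\<bar>g (x, c s) - g (y, c s)\<bar> \<le> Cg * \<rho>"
        using Cg[OF cS[OF Gc[OF x], of s] cS[OF Gc[OF y], of s]] al by (simp add: \<rho>_def)
      have "\<bar>h x s - h y s\<bar> \<le> L * \<bar>u (x, s) - u (y, s)\<bar> + K * \<rho>"
        unfolding h_def L_def K_def
        by (rule hdiff_bound[OF Fm(1)[OF cS[OF Gc[OF x]]] ux uy fxy gxy a])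
      then show ?thesis using ex ey by (simp add: D_def)
    qed
    have AE3: "AE s in lborel. (s \<in> {0<..<T} \<longrightarrow> \<bar>u (x, s)\<bar> \<le> M \<and> u (x, s) = w x s) \<and>
        (s \<in> {0<..<T} \<longrightarrow> \<bar>u (y, s)\<bar> \<le> M \<and> u (y, s) = w y s) \<and> s \<noteq> 0 \<and> s \<noteq> T"
      using Gw[OF x] Gw[OF y] AEend by eventually_elim blast
    have key: "\<bar>D t'\<bar> \<le> (\<bar>u0 x - u0 y\<bar> + K*\<rho>*T) + L * integral {0..t'} (\<lambda>s. \<bar>D s\<bar>)"
      if t': "0 \<le> t'" "t' \<le> T" for t'
    proof -
      have ix: "set_integrable lborel {0..t'} (h x)" using t' by (intro hint_sub[OF x]) auto
      have iy: "set_integrable lborel {0..t'} (h y)" using t' by (intro hint_sub[OF y]) auto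
      have eqD: "D t' = (u0 x - u0 y) + (LINT s:{0..t'}|lborel. h x s - h y s)"
        using t' by (simp add: D_def w_def cid set_integral_diff(2)[OF ix iy])
      have iR: "set_integrable lborel {0..t'} (\<lambda>s. L * \<bar>D s\<bar> + K * \<rho>)"
        by (rule borel_integrable_atLeastAtMost') (intro continuous_intros Dc)
      have "\<bar>LINT s:{0..t'}|lborel. h x s - h y s\<bar> \<le> (LINT s:{0..t'}|lborel. \<bar>h x s - h y s\<bar>)"
        using set_integral_norm_bound[OF set_integral_diff(1)[OF ix iy]] by simp
      also have "\<dots> \<le> (LINT s:{0..t'}|lborel. L * \<bar>D s\<bar> + K * \<rho>)"
      proof (rule set_integral_mono_AE)
        show "set_integrable lborel {0..t'} (\<lambda>s. \<bar>h x s - h y s\<bar>)"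
          by (rule set_integrable_abs[OF set_integral_diff(1)[OF ix iy]])
        show "set_integrable lborel {0..t'} (\<lambda>s. L * \<bar>D s\<bar> + K * \<rho>)" by (rule iR)
        show "AE s \<in> {0..t'} in lborel. \<bar>h x s - h y s\<bar> \<le> L * \<bar>D s\<bar> + K * \<rho>"
          using AE3
        proof eventually_elim
          case (elim s)
          show ?case
          proof
            assume "s \<in> {0..t'}"
            then have s: "s \<in> {0<..<T}" using elim t' by auto
            show "\<bar>h x s - h y s\<bar> \<le> L * \<bar>D s\<bar> + K * \<rho>"
              by (rule ptw[OF s]) (use elim s in blast)+
          qed
        qed
      qed
      also have "\<dots> = integral {0..t'} (\<lambda>s. L * \<bar>D s\<bar> + K * \<rho>)"
        by (rule set_borel_integral_eq_integral(2)[OF iR])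
      also have "\<dots> = integral {0..t'} (\<lambda>s. L * \<bar>D s\<bar>) + integral {0..t'} (\<lambda>s. K * \<rho>)"
        by (rule integral_add) (intro integrable_continuous_interval continuous_intros Dc)+
      also have "\<dots> = L * integral {0..t'} (\<lambda>s. \<bar>D s\<bar>) + K * \<rho> * t'"
        using t' by simp
      finally have 1: "\<bar>LINT s:{0..t'}|lborel. h x s - h y s\<bar> \<le> L * integral {0..t'} (\<lambda>s. \<bar>D s\<bar>) + K * \<rho> * t'" .
      have 2: "K * \<rho> * t' \<le> K * \<rho> * T" using K0 \<rho>0 t' by (intro mult_left_mono) auto
      show ?thesis using eqD 1 2 by linarith
    qed
    have gr: "\<bar>D t\<bar> \<le> (\<bar>u0 x - u0 y\<bar> + K*\<rho>*T) * exp (L * t)"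
      by (rule gronwall_aux[of T "\<lambda>s. \<bar>D s\<bar>" L]) (use t key L0 in \<open>auto intro: continuous_intros Dc\<close>)
    also have "\<dots> \<le> (\<bar>u0 x - u0 y\<bar> + K*\<rho>*T) * exp (L * T)"
      using t L0 K0 \<rho>0 T by (intro mult_left_mono) (auto intro!: mult_left_mono)
    also have "\<dots> \<le> (Cu * \<rho> + K*\<rho>*T) * exp (L * T)"
      using Cu[OF Gc[OF x] Gc[OF y]] by (intro mult_right_mono) (auto simp: \<rho>_def dist_norm)
    also have "\<dots> = C1 * norm (x - y) powr \<alpha>" by (simp add: C1_def \<rho>_def algebra_simps)
    finally show ?thesis by (simp add: D_def)
  qed

  define W where "W p = w (fst p) (snd p)" for p
  define X where "X = G \<times> {0..T}"
  define C2 where "C2 = C1 + B * T powr (1 - \<alpha>/2)"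
  have BT0: "B * T powr (1 - \<alpha>/2) \<ge> 0" using B0 by simp
  have C20: "C2 \<ge> 0" using C10 BT0 by (simp add: C2_def)
  have tpow: "\<bar>t - s\<bar> \<le> T powr (1 - \<alpha>/2) * \<bar>t - s\<bar> powr (\<alpha>/2)" if "t \<in> {0..T}" "s \<in> {0..T}" for t s
  proof -
    have z: "\<bar>t - s\<bar> \<le> T" "0 \<le> \<bar>t - s\<bar>" using that by auto
    have "\<bar>t - s\<bar> = \<bar>t - s\<bar> powr (1 - \<alpha>/2 + \<alpha>/2)" using z by simp
    also have "\<dots> = \<bar>t - s\<bar> powr (1 - \<alpha>/2) * \<bar>t - s\<bar> powr (\<alpha>/2)" by (rule powr_add)
    also have "\<dots> \<le> T powr (1 - \<alpha>/2) * \<bar>t - s\<bar> powr (\<alpha>/2)"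
      using z al by (intro mult_right_mono powr_mono2) auto
    finally show ?thesis .
  qed
  have WH: "\<bar>W p - W q\<bar> \<le> C2 * (norm (fst p - fst q) powr \<alpha> + \<bar>snd p - snd q\<bar> powr (\<alpha>/2))"
    if pqX: "p \<in> X" "q \<in> X" for p q
  proof -
    obtain x t where p: "p = (x, t)" "x \<in> G" "t \<in> {0..T}" using pqX(1) by (auto simp: X_def)
    obtain y s where q: "q = (y, s)" "y \<in> G" "s \<in> {0..T}" using pqX(2) by (auto simp: X_def)
    define n where "n = norm (x - y) powr \<alpha>"
    define m where "m = \<bar>t - s\<bar> powr (\<alpha>/2)"
    have n0: "n \<ge> 0" and m0: "m \<ge> 0" by (simp_all add: n_def m_def)
    have "\<bar>w x t - w y s\<bar> \<le> \<bar>w x t - w y t\<bar> + \<bar>w y t - w y s\<bar>" by arith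
    also have "\<dots> \<le> C1 * n + B * \<bar>t - s\<bar>"
      using xhold[OF p(2) q(2) p(3)] wlip[OF q(2), of t s] unfolding n_def by linarith
    also have "\<dots> \<le> C1 * n + B * (T powr (1 - \<alpha>/2) * m)"
      unfolding m_def using tpow[OF p(3) q(3)] B0 by (intro add_left_mono mult_left_mono) auto
    also have "\<dots> \<le> C2 * n + C2 * m"
    proof -
      have "C1 * n \<le> C2 * n" using n0 BT0 by (intro mult_right_mono) (auto simp: C2_def)
      moreover have "(B * T powr (1 - \<alpha>/2)) * m \<le> C2 * m" using m0 C10 by (intro mult_right_mono) (auto simp: C2_def)
      ultimately show ?thesis by (simp add: mult.assoc)
    qed
    finally show ?thesis by (simp add: p q W_def n_def m_def algebra_simps)
  qed
  have WUC: "uniformly_continuous_on X W"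
  proof (rule ucont_holder2[where C=C2 and \<beta>=\<alpha> and D=C2 and \<gamma>="\<alpha>/2"])
    fix p q assume pq: "p \<in> X" "q \<in> X"
    have d1: "norm (fst p - fst q) \<le> dist p q" using dist_fst_le[of p q] by (simp add: dist_norm)
    have d2: "\<bar>snd p - snd q\<bar> \<le> dist p q" using dist_snd_le[of p q] by (simp add: dist_real_def)
    have "norm (fst p - fst q) powr \<alpha> \<le> dist p q powr \<alpha>" using d1 al by (intro powr_mono2) auto
    moreover have "\<bar>snd p - snd q\<bar> powr (\<alpha>/2) \<le> dist p q powr (\<alpha>/2)" using d2 al by (intro powr_mono2) auto
    ultimately have "C2 * (norm (fst p - fst q) powr \<alpha> + \<bar>snd p - snd q\<bar> powr (\<alpha>/2))
        \<le> C2 * (dist p q powr \<alpha> + dist p q powr (\<alpha>/2))" using C20 by (intro mult_left_mono) auto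
    then show "\<bar>W p - W q\<bar> \<le> C2 * dist p q powr \<alpha> + C2 * dist p q powr (\<alpha>/2)"
      using WH[OF pq] by (simp add: algebra_simps)
  qed (use al in auto)
  obtain v where v: "uniformly_continuous_on (closure X) v" "\<And>p. p \<in> X \<Longrightarrow> W p = v p"
    using uniformly_continuous_on_extension_on_closure[OF WUC] by metis
  have clX: "closure X = ?S" unfolding X_def closure_Times clG by simp
  have vc: "continuous_on ?S v" using uniformly_continuous_imp_continuous[OF v(1)] clX by simp
  have vH: "\<bar>v p - v q\<bar> \<le> C2 * (norm (fst p - fst q) powr \<alpha> + \<bar>snd p - snd q\<bar> powr (\<alpha>/2))"
    if "p \<in> X" "q \<in> X" for p q
    using WH[OF that] v(2)[OF that(1)] v(2)[OF that(2)] by simp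
  show ?thesis
  proof (intro exI conjI)
    show "par_holder_space ?S \<alpha> v" unfolding par_holder_space_def
    proof
      have "compact ?S" using assms(2) by (intro compact_Times compact_Icc) (simp add: compact_closure)
      then show "bounded (v ` ?S)" by (intro compact_imp_bounded compact_continuous_image vc)
      have vc': "continuous_on (closure X) v" using vc clX by simp
      show "\<exists>C. \<forall>p\<in>?S. \<forall>q\<in>?S. \<bar>v p - v q\<bar> \<le> C * (norm (fst p - fst q) powr \<alpha> + \<bar>snd p - snd q\<bar> powr (\<alpha> / 2))"
      proof (intro exI ballI)
        fix p q assume "p \<in> ?S" "q \<in> ?S"
        then have "p \<in> closure X" "q \<in> closure X" using clX by auto
        then show "\<bar>v p - v q\<bar> \<le> C2 * (norm (fst p - fst q) powr \<alpha> + \<bar>snd p - snd q\<bar> powr (\<alpha> / 2))"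
          using holder_closure[of X v C2 \<alpha> p q] vc' vH al(1) by blast
      qed
    qed
    have AEit: "AE x in lborel. AE t in lborel. (x, t) \<in> \<Omega> \<times> {0<..<T} \<longrightarrow> u (x, t) = v (x, t)"
      using AEg
    proof eventually_elim
      case (elim x)
      show ?case
      proof (cases "x \<in> \<Omega>")
        case True
        then have xG: "x \<in> G" using elim by (simp add: G_def)
        show ?thesis using Gw[OF xG]
        proof eventually_elim
          case (elim t)
          show ?case
          proof
            assume "(x, t) \<in> \<Omega> \<times> {0<..<T}"
            then have "t \<in> {0<..<T}" "(x, t) \<in> X" using xG by (auto simp: X_def)
            then show "u (x, t) = v (x, t)" using elim v(2)[of "(x, t)"] by (simp add: W_def)
          qed
        qed
      next
        case False
        then show ?thesis by simp
      qed
    qed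
    define QQ where "QQ = \<Omega> \<times> {0<..<T}"
    have QQo: "open QQ" using assms(1) by (simp add: QQ_def open_Times)
    have QQS: "QQ \<subseteq> ?S" using closure_subset by (auto simp: QQ_def)
    have vQQ: "continuous_on QQ v" using continuous_on_subset[OF vc QQS] .
    define k where "k p = indicator QQ p *\<^sub>R v p" for p
    have [measurable]: "k \<in> borel_measurable borel" unfolding k_def[abs_def]
      by (rule borel_measurable_continuous_on_indicator) (use QQo vQQ in auto)
    have [measurable]: "u \<in> borel_measurable borel" using umeas by simp
    have [measurable]: "QQ \<in> sets borel" using QQo by simp
    have "{p \<in> space borel. p \<in> QQ \<longrightarrow> u p = k p} \<in> sets borel" by measurable
    moreover have "{p \<in> space borel. p \<in> QQ \<longrightarrow> u p = k p} = {p \<in> space (lborel \<Otimes>\<^sub>M lborel). p \<in> QQ \<longrightarrow> u p = v p}"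
      by (auto simp: k_def lborel_prod)
    ultimately have meas: "{p \<in> space (lborel \<Otimes>\<^sub>M lborel). p \<in> QQ \<longrightarrow> u p = v p} \<in> sets (lborel \<Otimes>\<^sub>M lborel)"
      by (simp only: lborel_prod sets_lborel)
    have "AE p in lborel \<Otimes>\<^sub>M lborel. p \<in> QQ \<longrightarrow> u p = v p"
      by (rule lborel_pair.AE_pair_measure[OF meas]) (use AEit in \<open>simp add: QQ_def\<close>)
    then show "AE p in lborel. p \<in> \<Omega> \<times> {0<..<T} \<longrightarrow> u p = v p"
      by (simp only: lborel_prod QQ_def)
  qed
qed

end
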